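(* Let $(X,d,f)$ be a topological dynamical system ($(X,d)$ compact metric, $f:X\to X$ continuous). Fix $\epsilon>0$, $\delta\in(0,1)$ and $n\in\mathbb N$. Then the function $\mathscr M_{\rm erg}(X,f)\to\mathbb R$, $\nu\mapsto N^\nu(n,\epsilon,\delta)$, is upper semi-continuous with respect to the weak* topology.
   Context: $\mathscr M_{\rm erg}(X,f)$ is the set of ergodic $f$-invariant Borel probability measures. $B_n(x,\epsilon)=\{y\in X:\max_{0\le i\le n-1}d(f^ix,f^iy)<\epsilon\}$. $N^\nu(n,\epsilon,\delta)$ is the minimal number of Bowen balls $B_n(x,\epsilon)$ whose union covers a set of $\nu$-measure larger than $1-\delta$. *)

theory Defs
  imports "HOL-Probability.Probability"
begin

definition bowen_ball :: "('a::metric_space \<Rightarrow> 'a) \<Rightarrow> nat \<Rightarrow> 'a \<Rightarrow> real \<Rightarrow> 'a set" where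
  "bowen_ball f n x eps = {y. \<forall>i<n. dist ((f ^^ i) x) ((f ^^ i) y) < eps}"

definition bowen_cover_number ::
  "('a::metric_space \<Rightarrow> 'a) \<Rightarrow> 'a measure \<Rightarrow> nat \<Rightarrow> real \<Rightarrow> real \<Rightarrow> nat" where
  "bowen_cover_number f \<nu> n eps \<delta> =
     (LEAST k. \<exists>C. finite C \<and> card C = k \<and>
                   measure \<nu> (\<Union>x\<in>C. bowen_ball f n x eps) > 1 - \<delta>)"

definition borel_prob_measures :: "'a::topological_space measure set" where
  "borel_prob_measures = {\<mu>. prob_space \<mu> \<and> sets \<mu> = sets borel}"

definition erg_measures :: "('a::topological_space \<Rightarrow> 'a) \<Rightarrow> 'a measure set" where
  "erg_measures f = {\<mu>. \<mu> \<in> borel_prob_measures \<and> f \<in> measurable \<mu> \<mu> \<and> distr \<mu> \<mu> f = \<mu> \<and>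
      (\<forall>A\<in>sets \<mu>. f -` A \<inter> space \<mu> = A \<longrightarrow> measure \<mu> A = 0 \<or> measure \<mu> A = 1)}"

definition weak_star_topology :: "'a::topological_space measure topology" where
  "weak_star_topology = topology_generated_by
     {{\<mu>\<in>borel_prob_measures. (\<integral>x. \<phi> x \<partial>\<mu>) \<in> U} | \<phi> U.
        continuous_on UNIV (\<phi> :: 'a \<Rightarrow> real) \<and> open U}"

definition usc_on :: "'b topology \<Rightarrow> 'b set \<Rightarrow> ('b \<Rightarrow> real) \<Rightarrow> bool" where
  "usc_on T E g \<longleftrightarrow> (\<forall>\<nu>\<in>E. \<forall>c. g \<nu> < c \<longrightarrow>
       (\<exists>W. openin T W \<and> \<nu> \<in> W \<and> (\<forall>\<mu>\<in>W \<inter> E. g \<mu> < c)))"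

end

theory Submission
  imports Defs
begin

lemma funpow_cont: "continuous_on UNIV (f::'a::topological_space \<Rightarrow> 'a) \<Longrightarrow> continuous_on UNIV (f ^^ i)"
proof (induction i)
  case 0
  have "f^^0 = (\<lambda>x. x)" by (rule ext) simp
  then show ?case by (simp add: continuous_on_id)
next
  case (Suc i)
  have "continuous_on UNIV (f \<circ> (f^^i))"
    by (rule continuous_on_compose[OF Suc.IH[OF Suc.prems] continuous_on_subset[OF Suc.prems]]) simp
  then show ?case by simp
qed

lemma bowen_open:
  assumes "continuous_on UNIV (f::'a::metric_space \<Rightarrow> 'a)"
  shows "open (bowen_ball f n x eps)"
proof -
  have "bowen_ball f n x eps = (\<Inter>i\<in>{..<n}. {y. dist ((f ^^ i) x) ((f ^^ i) y) < eps})"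
    unfolding bowen_ball_def by auto
  moreover have "open {y. dist ((f ^^ i) x) ((f ^^ i) y) < eps}" for i
    by (intro open_Collect_less continuous_intros funpow_cont assms)
  ultimately show ?thesis by auto
qed

lemma meas_lsc:
  fixes U :: "'a::metric_space set"
  assumes nu: "\<nu> \<in> borel_prob_measures" and U: "open U" and gt: "measure \<nu> U > t"
  shows "\<exists>W. openin weak_star_topology W \<and> \<nu> \<in> W \<and>
           (\<forall>\<mu>\<in>W. \<mu> \<in> borel_prob_measures \<longrightarrow> measure \<mu> U > t)"
proof (cases "- U = {}")
  case True
  then have UU: "U = UNIV" by auto
  define W :: "'a measure set" where "W = {\<mu>\<in>borel_prob_measures. (\<integral>x. (\<lambda>_. 0::real) x \<partial>\<mu>) \<in> (UNIV::real set)}"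
  have "openin weak_star_topology W"
    unfolding weak_star_topology_def W_def
    by (rule topology_generated_by_Basis) (auto intro!: exI[of _ "\<lambda>_. 0::real"] exI[of _ UNIV])
  moreover have "\<nu> \<in> W" using nu by (simp add: W_def)
  moreover have "measure \<mu> U > t" if "\<mu> \<in> borel_prob_measures" for \<mu>
  proof -
    from that have "prob_space \<mu>" "sets \<mu> = sets borel" by (auto simp: borel_prob_measures_def)
    moreover from nu have "prob_space \<nu>" "sets \<nu> = sets borel" by (auto simp: borel_prob_measures_def)
    ultimately show ?thesis using gt UU
      by (metis prob_space.prob_space sets_eq_imp_space_eq space_borel)
  qed
  ultimately show ?thesis by blast
next
  case False
  have cl: "closed (- U)" using U by auto
  define \<phi> where "\<phi> m x = min 1 (real m * infdist x (- U))" for m x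
  have cont: "continuous_on UNIV (\<phi> m)" for m
    unfolding \<phi>_def by (intro continuous_intros)
  have meas: "\<phi> m \<in> borel_measurable M" if "sets M = sets borel" for m and M :: "'a measure"
    using borel_measurable_continuous_onI[OF cont] measurable_cong_sets[OF that refl] by blast
  have bnd: "norm (\<phi> m x) \<le> 1" for m x
    unfolding \<phi>_def using infdist_nonneg[of x "-U"] by auto
  have le: "\<phi> m x \<le> indicator U x" for m x
  proof (cases "x \<in> U")
    case True then show ?thesis by (simp add: \<phi>_def)
  next
    case False
    then have "infdist x (-U) = 0" by (simp add: infdist_zero)
    then show ?thesis using False by (simp add: \<phi>_def)
  qed
  have lim: "(\<lambda>m. \<phi> m x) \<longlonglongrightarrow> indicator U x" for x
  proof (cases "x \<in> U")
    case True
    then have pos: "infdist x (-U) > 0" using infdist_pos_not_in_closed[OF cl False] by auto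
    obtain N where N: "real N > 1 / infdist x (-U)" using reals_Archimedean2 by blast
    have "\<phi> m x = 1" if "m \<ge> N" for m
    proof -
      have "real m * infdist x (-U) \<ge> real N * infdist x (-U)"
        using that pos by (intro mult_right_mono) auto
      moreover have "real N * infdist x (-U) > 1" using N pos by (simp add: field_simps)
      ultimately show ?thesis by (simp add: \<phi>_def)
    qed
    then have "eventually (\<lambda>m. \<phi> m x = indicator U x) sequentially"
      using True by (auto simp: eventually_sequentially)
    then show ?thesis by (rule tendsto_eventually)
  next
    case False
    then have "infdist x (-U) = 0" by (simp add: infdist_zero)
    then show ?thesis using False by (simp add: \<phi>_def)
  qed
  from nu have pnu: "prob_space \<nu>" and snu: "sets \<nu> = sets borel" by (auto simp: borel_prob_measures_def)
  have Umeas: "U \<in> sets \<nu>" using snu U by auto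
  have "(\<lambda>m. integral\<^sup>L \<nu> (\<phi> m)) \<longlonglongrightarrow> integral\<^sup>L \<nu> (indicator U)"
  proof (rule integral_dominated_convergence[where w="\<lambda>_. 1"])
    show "indicator U \<in> borel_measurable \<nu>" using Umeas by simp
    show "\<phi> i \<in> borel_measurable \<nu>" for i using meas[OF snu] .
    show "integrable \<nu> (\<lambda>_. 1::real)" using pnu by (simp add: prob_space.finite_measure finite_measure.integrable_const)
    show "AE x in \<nu>. (\<lambda>i. \<phi> i x) \<longlonglongrightarrow> indicator U x" using lim by simp
    show "AE x in \<nu>. norm (\<phi> i x) \<le> 1" for i using bnd by simp
  qed
  moreover have "integral\<^sup>L \<nu> (indicator U) = measure \<nu> U"
    using Umeas by (simp add: sets.Int_space_eq2)
  ultimately have "eventually (\<lambda>m. integral\<^sup>L \<nu> (\<phi> m) > t) sequentially"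
    using gt by (simp add: order_tendstoD(1))
  then obtain m where m: "integral\<^sup>L \<nu> (\<phi> m) > t" by (auto simp: eventually_sequentially)
  define W :: "'a measure set" where "W = {\<mu>\<in>borel_prob_measures. (\<integral>x. \<phi> m x \<partial>\<mu>) \<in> {t<..}}"
  have "openin weak_star_topology W"
    unfolding weak_star_topology_def W_def
    by (rule topology_generated_by_Basis) (use cont in \<open>auto intro!: exI[of _ "\<phi> m"] exI[of _ "{t<..}"]\<close>)
  moreover have "\<nu> \<in> W" using nu m by (simp add: W_def)
  moreover have "measure \<mu> U > t" if "\<mu> \<in> W" for \<mu>
  proof -
    from that have pm: "prob_space \<mu>" and sm: "sets \<mu> = sets borel" and it: "integral\<^sup>L \<mu> (\<phi> m) > t"
      by (auto simp: borel_prob_measures_def W_def)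
    have Um: "U \<in> sets \<mu>" using sm U by auto
    have "integral\<^sup>L \<mu> (\<phi> m) \<le> integral\<^sup>L \<mu> (indicator U)"
    proof (rule integral_mono)
      show "integrable \<mu> (\<phi> m)"
        using bnd meas[OF sm] by (intro finite_measure.integrable_const_bound[OF prob_space.finite_measure[OF pm], where B=1]) auto
      show "integrable \<mu> (indicator U :: 'a \<Rightarrow> real)"
        using Um by (intro finite_measure.integrable_const_bound[OF prob_space.finite_measure[OF pm], where B=1]) auto
    qed (use le in auto)
    also have "\<dots> = measure \<mu> U" using Um by (simp add: sets.Int_space_eq2)
    finally show ?thesis using it by simp
  qed
  ultimately show ?thesis by blast
qed

theorem lemma4p3:
  fixes f :: "'a::metric_space \<Rightarrow> 'a" and eps \<delta> :: real and n :: nat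
  assumes "compact (UNIV :: 'a set)"
    and "continuous_on UNIV f"
    and "eps > 0" and "0 < \<delta>" and "\<delta> < 1"
  shows "usc_on weak_star_topology (erg_measures f)
           (\<lambda>\<nu>. real (bowen_cover_number f \<nu> n eps \<delta>))"
  unfolding usc_on_def
proof (intro ballI allI impI)
  fix \<nu> and c :: real
  assume nuE: "\<nu> \<in> erg_measures f" and lt: "real (bowen_cover_number f \<nu> n eps \<delta>) < c"
  then have nu: "\<nu> \<in> borel_prob_measures" by (simp add: erg_measures_def)
  then have pnu: "prob_space \<nu>" and snu: "sets \<nu> = sets borel" by (auto simp: borel_prob_measures_def)
  let ?P = "\<lambda>\<mu> k. \<exists>C. finite C \<and> card C = k \<and> measure \<mu> (\<Union>x\<in>C. bowen_ball f n x eps) > 1 - \<delta>"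
  have ex: "\<exists>k. ?P \<nu> k"
  proof -
    have "\<And>x. open (bowen_ball f n x eps)" using bowen_open[OF assms(2)] .
    moreover have "UNIV \<subseteq> (\<Union>x\<in>UNIV. bowen_ball f n x eps)"
      using assms(3) by (auto simp: bowen_ball_def)
    ultimately obtain D where D0: "D \<subseteq> UNIV" and D: "finite D" "UNIV \<subseteq> (\<Union>x\<in>D. bowen_ball f n x eps)"
      by (rule compactE_image[OF assms(1), of UNIV "\<lambda>x. bowen_ball f n x eps"])
    have sp: "space \<nu> = UNIV" using sets_eq_imp_space_eq[OF snu] by simp
    have "(\<Union>x\<in>D. bowen_ball f n x eps) = space \<nu>"
      using D(2) sp by blast
    then have "measure \<nu> (\<Union>x\<in>D. bowen_ball f n x eps) = 1"
      using pnu by (simp add: prob_space.prob_space)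
    then show ?thesis using D assms(4) by auto
  qed
  obtain C where C: "finite C" "card C = bowen_cover_number f \<nu> n eps \<delta>"
      "measure \<nu> (\<Union>x\<in>C. bowen_ball f n x eps) > 1 - \<delta>"
  proof -
    have "?P \<nu> (LEAST k. ?P \<nu> k)" by (rule LeastI_ex[OF ex])
    then show ?thesis using that unfolding bowen_cover_number_def by blast
  qed
  have op: "open (\<Union>x\<in>C. bowen_ball f n x eps)" using bowen_open[OF assms(2)] by auto
  obtain W where W: "openin weak_star_topology W" "\<nu> \<in> W"
    "\<forall>\<mu>\<in>W. \<mu> \<in> borel_prob_measures \<longrightarrow> measure \<mu> (\<Union>x\<in>C. bowen_ball f n x eps) > 1 - \<delta>"
    using meas_lsc[OF nu op C(3)] by blast
  show "\<exists>W. openin weak_star_topology W \<and> \<nu> \<in> W \<and>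
          (\<forall>\<mu>\<in>W \<inter> erg_measures f. real (bowen_cover_number f \<mu> n eps \<delta>) < c)"
  proof (intro exI conjI ballI)
    fix \<mu> assume "\<mu> \<in> W \<inter> erg_measures f"
    then have "\<mu> \<in> W" "\<mu> \<in> borel_prob_measures" by (simp_all add: erg_measures_def)
    then have "?P \<mu> (card C)" using W(3) C(1) by blast
    then have "bowen_cover_number f \<mu> n eps \<delta> \<le> card C"
      unfolding bowen_cover_number_def by (rule Least_le)
    then show "real (bowen_cover_number f \<mu> n eps \<delta>) < c" using C(2) lt by linarith
  qed (use W in auto)
qed

end
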